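(* Let $A$ be a complex $r$-matrix of order $n_1\times\cdots\times n_r$ and write $N=n_1\cdots n_r$. Then: (a) $\|A\|_1=|A|_{\max}$; (b) if $p\geq q\geq 1$, then $\|A\|_p\geq\|A\|_q$; (c) if $p\geq q\geq 1$, then $N^{1/p}\|A\|_p\leq N^{1/q}\|A\|_q$; (d) $\|A\|_p\leq|A|_1$ for every $p\geq1$; (e) if $p\geq q\geq 1$, then $0\leq\|A\|_p-\|A\|_q\leq (p-q)\,|A|_1\,N\log N$.
   Context: An $r$-matrix $A$ of order $n_1\times\cdots\times n_r$ is a function on $[n_1]\times\cdots\times[n_r]$ with values $a_{i_1,\ldots,i_r}$. $|A|_{\max}=\max|a_{i_1,\ldots,i_r}|$ and $|A|_1=\sum|a_{i_1,\ldots,i_r}|$. The linear form is $L_A(\mathbf{x}^{(1)},\ldots,\mathbf{x}^{(r)})=\sum a_{i_1,\ldots,i_r}\overline{x^{(1)}_{i_1}}\cdots\overline{x^{(r)}_{i_r}}$ for $\mathbf{x}^{(k)}\in\mathbb{C}^{n_k}$, and for real $p\geq1$ the spectral $p$-norm is $\|A\|_p=\max\{|L_A(\mathbf{x}^{(1)},\ldots,\mathbf{x}^{(r)})|:|\mathbf{x}^{(1)}|_p=\cdots=|\mathbf{x}^{(r)}|_p=1\}$, where $|\cdot|_p$ is the $\ell^p$ norm. *)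

theory Defs
  imports "HOL-Analysis.Analysis"
begin

text \<open>An r-matrix of order n_1 x ... x n_r is represented by the list of dimensions
  ns = [n_1, ..., n_r] and a function A on index lists (0-based indices).
  Only the values of A on the index set matter.\<close>

definition idx :: "nat list \<Rightarrow> nat list set" where
  "idx ns = {is. length is = length ns \<and> (\<forall>k<length ns. is ! k < ns ! k)}"

definition maxabs :: "nat list \<Rightarrow> (nat list \<Rightarrow> complex) \<Rightarrow> real" where
  "maxabs ns A = Max ((\<lambda>is. cmod (A is)) ` idx ns)"

definition norm1 :: "nat list \<Rightarrow> (nat list \<Rightarrow> complex) \<Rightarrow> real" where
  "norm1 ns A = (\<Sum>is\<in>idx ns. cmod (A is))"

definition lpnorm :: "real \<Rightarrow> nat \<Rightarrow> (nat \<Rightarrow> complex) \<Rightarrow> real" where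
  "lpnorm p n x = (\<Sum>i<n. cmod (x i) powr p) powr (1 / p)"

text \<open>Linear form; xs k is the vector x^(k+1).\<close>
definition linform :: "nat list \<Rightarrow> (nat list \<Rightarrow> complex) \<Rightarrow> (nat \<Rightarrow> nat \<Rightarrow> complex) \<Rightarrow> complex" where
  "linform ns A xs = (\<Sum>is\<in>idx ns. A is * (\<Prod>k<length ns. cnj (xs k (is ! k))))"

definition specnorm :: "real \<Rightarrow> nat list \<Rightarrow> (nat list \<Rightarrow> complex) \<Rightarrow> real" where
  "specnorm p ns A = Sup {cmod (linform ns A xs) | xs.
      \<forall>k<length ns. lpnorm p (ns ! k) (xs k) = 1}"

end

theory Submission
  imports Defs "HOL-Analysis.Analysis"
begin

lemma idx_Nil: "idx [] = {[]}"
  by (auto simp: idx_def)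

lemma idx_Cons: "idx (n#ns) = (\<lambda>(i,ks). i#ks) ` ({..<n} \<times> idx ns)"
proof (intro set_eqI iffI)
  fix js assume "js \<in> idx (n#ns)"
  then obtain i ks where js: "js = i#ks" and "length ks = length ns"
    and h: "\<forall>k<Suc (length ns). js ! k < (n#ns) ! k"
    unfolding idx_def by (cases js) auto
  then have "i < n" using h by (metis nth_Cons_0 zero_less_Suc)
  moreover have "ks \<in> idx ns" using h \<open>length ks = length ns\<close> js
    unfolding idx_def by force
  ultimately show "js \<in> (\<lambda>(i,ks). i#ks) ` ({..<n} \<times> idx ns)" using js by auto
next
  fix js assume "js \<in> (\<lambda>(i,ks). i#ks) ` ({..<n} \<times> idx ns)"
  then show "js \<in> idx (n#ns)" unfolding idx_def
    by (auto simp: nth_Cons split: nat.splits)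
qed

lemma finite_idx: "finite (idx ns)"
  by (induction ns) (auto simp: idx_Nil idx_Cons)

lemma sum_prod_idx:
  fixes f :: "nat \<Rightarrow> nat \<Rightarrow> 'a::comm_semiring_1"
  shows "(\<Sum>ks\<in>idx ns. \<Prod>k<length ns. f k (ks ! k)) = (\<Prod>k<length ns. \<Sum>i<ns!k. f k i)"
proof (induction ns arbitrary: f)
  case Nil
  then show ?case by (simp add: idx_Nil)
next
  case (Cons n ns)
  have inj: "inj_on (\<lambda>(i,ks). i#ks) ({..<n} \<times> idx ns)" by (auto simp: inj_on_def)
  have "(\<Sum>ks\<in>idx (n#ns). \<Prod>k<length (n#ns). f k (ks ! k))
     = (\<Sum>(i,ks)\<in>{..<n} \<times> idx ns. \<Prod>k<Suc (length ns). f k ((i#ks) ! k))"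
    unfolding idx_Cons sum.reindex[OF inj] by (simp add: comp_def case_prod_unfold del: prod.lessThan_Suc)
  also have "\<dots> = (\<Sum>(i,ks)\<in>{..<n} \<times> idx ns. f 0 i * (\<Prod>k<length ns. f (Suc k) (ks ! k)))"
    by (simp add: prod.lessThan_Suc_shift del: prod.lessThan_Suc)
  also have "\<dots> = (\<Sum>i<n. f 0 i) * (\<Sum>ks\<in>idx ns. \<Prod>k<length ns. f (Suc k) (ks ! k))"
    by (simp add: sum_product sum.cartesian_product)
  also have "\<dots> = (\<Sum>i<n. f 0 i) * (\<Prod>k<length ns. \<Sum>i<ns!k. f (Suc k) i)"
    using Cons.IH[of "\<lambda>k. f (Suc k)"] by simp
  also have "\<dots> = (\<Prod>k<length (n#ns). \<Sum>i<(n#ns)!k. f k i)"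
    by (simp add: prod.lessThan_Suc_shift del: prod.lessThan_Suc)
  finally show ?case .
qed

lemma prod_list_nth: "prod_list ns = (\<Prod>k<length ns. ns ! k)"
  by (induction ns) (simp_all add: prod.lessThan_Suc_shift del: prod.lessThan_Suc)

lemma idx_nth: "ks \<in> idx ns \<Longrightarrow> k < length ns \<Longrightarrow> ks ! k < ns ! k"
  by (simp add: idx_def)

lemma lpnorm_nonneg: "lpnorm p n x \<ge> 0"
  by (simp add: lpnorm_def)

lemma lpnorm_zero_iff: "lpnorm p n x = 0 \<longleftrightarrow> (\<forall>i<n. x i = 0)"
  unfolding lpnorm_def by (auto simp: sum_nonneg_eq_0_iff)

lemma lpnorm_1: "lpnorm 1 n x = (\<Sum>i<n. cmod (x i))"
  unfolding lpnorm_def by (simp add: sum_nonneg)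

lemma lpnorm_scale:
  assumes "p > 0" "c \<ge> 0"
  shows "lpnorm p n (\<lambda>i. complex_of_real c * x i) = c * lpnorm p n x"
proof -
  have "(\<Sum>i<n. cmod (complex_of_real c * x i) powr p) = c powr p * (\<Sum>i<n. cmod (x i) powr p)"
    using assms by (simp add: norm_mult powr_mult sum_distrib_left)
  then show ?thesis unfolding lpnorm_def using assms
    by (simp add: powr_mult powr_powr)
qed

lemma unit_sum:
  assumes "p > 0" "lpnorm p n x = 1"
  shows "(\<Sum>i<n. cmod (x i) powr p) = 1"
proof -
  let ?S = "(\<Sum>i<n. cmod (x i) powr p)"
  have "?S \<ge> 0" by (simp add: sum_nonneg)
  have "?S powr (1/p) = 1" using assms by (simp add: lpnorm_def)
  then have "(?S powr (1/p)) powr p = 1" by simp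
  then show ?thesis using assms \<open>?S \<ge> 0\<close> by (simp add: powr_powr)
qed

lemma unit_bound:
  assumes "p > 0" "lpnorm p n x = 1" "i < n"
  shows "cmod (x i) \<le> 1"
proof (rule ccontr)
  assume "\<not> cmod (x i) \<le> 1"
  then have "1 powr p < cmod (x i) powr p" using assms by (intro powr_less_mono2) auto
  moreover have "cmod (x i) powr p \<le> (\<Sum>i<n. cmod (x i) powr p)"
    using assms by (intro member_le_sum) auto
  ultimately show False using unit_sum[OF assms(1,2)] by simp
qed

lemma lp_le:
  assumes "q > 0" "q \<le> p" "lpnorm q n x = 1"
  shows "lpnorm p n x \<le> 1"
proof -
  have "(\<Sum>i<n. cmod (x i) powr p) \<le> (\<Sum>i<n. cmod (x i) powr q)"
    using assms unit_bound[OF assms(1,3)] by (intro sum_mono powr_mono') auto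
  then have "(\<Sum>i<n. cmod (x i) powr p) \<le> 1" using unit_sum[OF assms(1,3)] by simp
  then show ?thesis unfolding lpnorm_def using assms
    by (intro powr_le1) (auto simp: sum_nonneg)
qed

lemma power_mean:
  assumes "q > 0" "q \<le> p" "lpnorm p n x = 1" "n \<ge> 1"
  shows "lpnorm q n x \<le> real n powr (1/q - 1/p)"
proof -
  define a where "a = q / p"
  define b where "b = 1 - a"
  have p0: "p > 0" using assms by simp
  have a: "0 \<le> a" "a \<le> 1" using assms by (auto simp: a_def)
  have pt: "cmod (x i) powr q * (1 / real n) powr b \<le> a * cmod (x i) powr p + b * (1 / real n)" for i
  proof (cases "x i = 0")
    case True then show ?thesis using a assms by (simp add: b_def)
  next
    case False
    have "(cmod (x i) powr p) powr a * (1 / real n) powr b \<le> a * cmod (x i) powr p + b * (1 / real n)"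
      using a False assms by (intro Youngs_inequality_0) (auto simp: b_def)
    moreover have "(cmod (x i) powr p) powr a = cmod (x i) powr q"
      using p0 by (simp add: powr_powr a_def)
    ultimately show ?thesis by simp
  qed
  have "(\<Sum>i<n. cmod (x i) powr q * (1 / real n) powr b) \<le> (\<Sum>i<n. a * cmod (x i) powr p + b * (1 / real n))"
    by (intro sum_mono pt)
  also have "\<dots> = a * (\<Sum>i<n. cmod (x i) powr p) + b"
    using assms by (simp add: sum.distrib sum_distrib_left)
  also have "\<dots> = 1" using unit_sum[OF p0 assms(3)] by (simp add: b_def)
  finally have "(\<Sum>i<n. cmod (x i) powr q) * (1 / real n) powr b \<le> 1"
    by (simp add: sum_distrib_right)
  then have S: "(\<Sum>i<n. cmod (x i) powr q) \<le> real n powr b"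
    using assms by (simp add: powr_divide field_simps)
  have "lpnorm q n x \<le> (real n powr b) powr (1/q)"
    unfolding lpnorm_def using assms S by (intro powr_mono2) (auto simp: sum_nonneg)
  also have "\<dots> = real n powr (1/q - 1/p)"
    using assms by (simp add: powr_powr b_def a_def field_simps)
  finally show ?thesis .
qed

lemma linform_bound:
  assumes "\<forall>k<length ns. \<forall>i<ns!k. cmod (xs k i) \<le> 1"
  shows "cmod (linform ns A xs) \<le> norm1 ns A"
  unfolding linform_def norm1_def
proof (rule order_trans[OF norm_sum], rule sum_mono)
  fix ks assume "ks \<in> idx ns"
  have "(\<Prod>k<length ns. cmod (cnj (xs k (ks ! k)))) \<le> 1"
    using assms idx_nth[OF \<open>ks \<in> idx ns\<close>] by (intro prod_le_1) auto
  then show "cmod (A ks * (\<Prod>k<length ns. cnj (xs k (ks ! k)))) \<le> cmod (A ks)"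
    by (simp add: norm_mult prod_norm[symmetric] mult_left_le)
qed

lemma linform_scale:
  "linform ns A (\<lambda>k i. complex_of_real (c k) * xs k i)
   = complex_of_real (\<Prod>k<length ns. c k) * linform ns A xs"
  unfolding linform_def
  by (simp add: prod.distrib sum_distrib_left mult_ac)

lemma lpnorm_delta:
  assumes "p > 0" "m < n"
  shows "lpnorm p n (\<lambda>i. if i = m then 1 else 0) = 1"
proof -
  have "(\<Sum>i<n. cmod (if i = m then 1 else 0 :: complex) powr p) = (\<Sum>i<n. if i = m then 1 else 0)"
    by (intro sum.cong) auto
  then show ?thesis using assms unfolding lpnorm_def by simp
qed

lemma linform_delta:
  assumes "j \<in> idx ns"
  shows "linform ns A (\<lambda>k i. if i = j!k then 1 else 0) = A j"
proof -
  have P: "(\<Prod>k<length ns. cnj (if ks!k = j!k then 1 else 0 :: complex)) = (if ks = j then 1 else 0)"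
    if "ks \<in> idx ns" for ks
  proof (cases "ks = j")
    case False
    have len: "length ks = length j" using that assms by (simp add: idx_def)
    have "\<exists>k<length ns. ks!k \<noteq> j!k"
    proof (rule ccontr)
      assume "\<not> (\<exists>k<length ns. ks!k \<noteq> j!k)"
      then have "ks = j" using len that by (intro nth_equalityI) (simp_all add: idx_def)
      then show False using False by simp
    qed
    then obtain k where k: "k < length ns" "ks!k \<noteq> j!k" by blast
    have "(\<Prod>k<length ns. cnj (if ks!k = j!k then 1 else 0 :: complex)) = 0"
      by (rule prod_zero) (use k in auto)
    then show ?thesis using False by simp
  qed simp
  have "linform ns A (\<lambda>k i. if i = j!k then 1 else 0) = (\<Sum>ks\<in>idx ns. if ks = j then A ks else 0)"
    unfolding linform_def by (rule sum.cong) (simp_all only: P, simp)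
  also have "\<dots> = A j" using assms by (subst sum.delta[OF finite_idx]) simp
  finally show ?thesis .
qed


theorem proposition4:
  fixes ns :: "nat list" and A :: "nat list \<Rightarrow> complex"
  assumes "\<forall>k<length ns. ns ! k \<ge> 1"
  defines "N \<equiv> prod_list ns"
  shows "specnorm 1 ns A = maxabs ns A
    \<and> (\<forall>p q::real. p \<ge> q \<and> q \<ge> 1 \<longrightarrow> specnorm p ns A \<ge> specnorm q ns A)
    \<and> (\<forall>p q::real. p \<ge> q \<and> q \<ge> 1 \<longrightarrow>
           real N powr (1 / p) * specnorm p ns A \<le> real N powr (1 / q) * specnorm q ns A)
    \<and> (\<forall>p::real. p \<ge> 1 \<longrightarrow> specnorm p ns A \<le> norm1 ns A)
    \<and> (\<forall>p q::real. p \<ge> q \<and> q \<ge> 1 \<longrightarrow>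
           0 \<le> specnorm p ns A - specnorm q ns A \<and>
           specnorm p ns A - specnorm q ns A \<le> (p - q) * norm1 ns A * real N * ln (real N))"
proof -
  define U where "U p xs \<longleftrightarrow> (\<forall>k<length ns. lpnorm p (ns!k) (xs k) = 1)" for p xs
  define S where "S p = {cmod (linform ns A xs) | xs. U p xs}" for p
  have spec: "specnorm p ns A = Sup (S p)" for p
    by (simp add: specnorm_def S_def U_def)
  have pos: "k < length ns \<Longrightarrow> 0 < ns ! k" for k using assms(1) by fastforce
  define e where "e = (\<lambda>(k::nat) (i::nat). if i = 0 then 1 else (0::complex))"
  have Ue: "U p e" if "p > 0" for p
    unfolding U_def e_def using that pos by (auto intro: lpnorm_delta)
  have bnd: "cmod (linform ns A xs) \<le> norm1 ns A" if "p > 0" "U p xs" for p xs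
    using that unit_bound[OF that(1)] by (intro linform_bound) (auto simp: U_def)
  have ne: "S p \<noteq> {}" if "p > 0" for p using Ue[OF that] by (auto simp: S_def)
  have bdd: "bdd_above (S p)" if "p > 0" for p
    using bnd[OF that] by (auto simp: S_def bdd_above_def)
  have upper: "cmod (linform ns A xs) \<le> specnorm p ns A" if "p > 0" "U p xs" for p xs
    unfolding spec using that by (intro cSup_upper bdd) (auto simp: S_def)
  have least: "specnorm p ns A \<le> B" if "p > 0" "\<And>xs. U p xs \<Longrightarrow> cmod (linform ns A xs) \<le> B" for p B
    unfolding spec using that ne[OF that(1)] by (intro cSup_least) (auto simp: S_def)
  have snn: "0 \<le> specnorm p ns A" if "p > 0" for p
    using upper[OF that Ue[OF that]] norm_ge_zero order_trans by blast
  have lpos: "lpnorm p (ns!k) (xs k) > 0" if "p > 0" "q > 0" "U q xs" "k < length ns" for p q xs k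
  proof -
    have "lpnorm p (ns!k) (xs k) \<noteq> 0"
    proof
      assume "lpnorm p (ns!k) (xs k) = 0"
      then have "lpnorm q (ns!k) (xs k) = 0" by (simp add: lpnorm_zero_iff)
      then show False using that by (simp add: U_def)
    qed
    then show ?thesis using lpnorm_nonneg[of p "ns!k" "xs k"] by simp
  qed
  have N1: "real N \<ge> 1"
  proof -
    have "(1::nat) \<le> N" unfolding N_def prod_list_nth using assms(1)
      by (intro prod_ge_1) auto
    then show ?thesis by simp
  qed
  have scaleU: "U p (\<lambda>k i. complex_of_real (1 / lpnorm p (ns!k) (xs k)) * xs k i)"
    if "p > 0" "q > 0" "U q xs" for p q xs
    unfolding U_def
  proof (intro allI impI)
    fix k assume k: "k < length ns"
    have l: "lpnorm p (ns!k) (xs k) > 0" using lpos[OF that k] .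
    have "lpnorm p (ns!k) (\<lambda>i. complex_of_real (1 / lpnorm p (ns!k) (xs k)) * xs k i)
        = (1 / lpnorm p (ns!k) (xs k)) * lpnorm p (ns!k) (xs k)"
      using l that(1) by (intro lpnorm_scale) auto
    then show "lpnorm p (ns!k) (\<lambda>i. complex_of_real (1 / lpnorm p (ns!k) (xs k)) * xs k i) = 1"
      using l by simp
  qed
  have scaleL: "cmod (linform ns A (\<lambda>k i. complex_of_real (1 / lpnorm p (ns!k) (xs k)) * xs k i))
      * (\<Prod>k<length ns. lpnorm p (ns!k) (xs k)) = cmod (linform ns A xs)"
    if "p > 0" "q > 0" "U q xs" for p q xs
  proof -
    have P: "(\<Prod>k<length ns. lpnorm p (ns!k) (xs k)) > 0" using lpos[OF that] by (intro prod_pos) auto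
    have "(\<Prod>k<length ns. 1 / lpnorm p (ns!k) (xs k)) = 1 / (\<Prod>k<length ns. lpnorm p (ns!k) (xs k))"
      by (simp add: prod_dividef)
    moreover have "linform ns A (\<lambda>k i. complex_of_real (1 / lpnorm p (ns!k) (xs k)) * xs k i)
       = complex_of_real (\<Prod>k<length ns. 1 / lpnorm p (ns!k) (xs k)) * linform ns A xs"
      by (rule linform_scale)
    ultimately have "cmod (linform ns A (\<lambda>k i. complex_of_real (1 / lpnorm p (ns!k) (xs k)) * xs k i))
       = (1 / (\<Prod>k<length ns. lpnorm p (ns!k) (xs k))) * cmod (linform ns A xs)"
      using P by (simp only: norm_mult norm_of_real abs_of_pos[OF divide_pos_pos[OF zero_less_one P]])
    moreover have aux: "\<And>x Q (L::real). x = 1/Q * L \<Longrightarrow> Q > 0 \<Longrightarrow> x * Q = L" by simp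
    ultimately show ?thesis using P by blast
  qed
  have d: "specnorm p ns A \<le> norm1 ns A" if "p \<ge> 1" for p
    using that by (intro least bnd) auto
  have b: "specnorm q ns A \<le> specnorm p ns A" if "p \<ge> q" "q \<ge> 1" for p q
  proof (rule least)
    show "q > 0" using that by simp
    fix xs assume U: "U q xs"
    have p0: "p > 0" "q > 0" using that by auto
    have "(\<Prod>k<length ns. lpnorm p (ns!k) (xs k)) \<le> 1"
      using U p0 that lp_le[of q p] lpnorm_nonneg by (intro prod_le_1) (auto simp: U_def)
    then have "cmod (linform ns A xs) \<le>
        cmod (linform ns A (\<lambda>k i. complex_of_real (1 / lpnorm p (ns!k) (xs k)) * xs k i))"
      using scaleL[OF p0 U, symmetric] by (simp add: mult_left_le)
    also have "\<dots> \<le> specnorm p ns A" using scaleU[OF p0 U] p0 by (intro upper)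
    finally show "cmod (linform ns A xs) \<le> specnorm p ns A" .
  qed
  have c': "specnorm p ns A \<le> real N powr (1/q - 1/p) * specnorm q ns A" if "p \<ge> q" "q \<ge> 1" for p q
  proof (rule least)
    show "p > 0" using that by simp
    fix xs assume U: "U p xs"
    have p0: "q > 0" "p > 0" using that by auto
    have "(\<Prod>k<length ns. lpnorm q (ns!k) (xs k)) \<le> (\<Prod>k<length ns. real (ns!k) powr (1/q - 1/p))"
      using U p0 that power_mean lpnorm_nonneg assms(1)
      by (intro prod_mono) (auto simp: U_def)
    also have "\<dots> = real N powr (1/q - 1/p)"
      by (simp add: N_def prod_list_nth prod_powr_distrib)
    finally have Pq: "(\<Prod>k<length ns. lpnorm q (ns!k) (xs k)) \<le> real N powr (1/q - 1/p)" .
    have "cmod (linform ns A xs) =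
        cmod (linform ns A (\<lambda>k i. complex_of_real (1 / lpnorm q (ns!k) (xs k)) * xs k i))
        * (\<Prod>k<length ns. lpnorm q (ns!k) (xs k))"
      using scaleL[OF p0 U] by simp
    also have "\<dots> \<le> specnorm q ns A * real N powr (1/q - 1/p)"
      using scaleU[OF p0 U] p0 Pq
      by (intro mult_mono upper) (auto intro!: prod_nonneg lpnorm_nonneg snn)
    finally show "cmod (linform ns A xs) \<le> real N powr (1/q - 1/p) * specnorm q ns A"
      by (simp add: mult.commute)
  qed
  have c: "real N powr (1 / p) * specnorm p ns A \<le> real N powr (1 / q) * specnorm q ns A"
    if "p \<ge> q" "q \<ge> 1" for p q
  proof -
    have "real N powr (1 / p) * specnorm p ns A \<le> real N powr (1 / p) * (real N powr (1/q - 1/p) * specnorm q ns A)"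
      using c'[OF that] by (intro mult_left_mono) auto
    also have "\<dots> = real N powr (1 / q) * specnorm q ns A"
      by (simp add: mult.assoc[symmetric] powr_add[symmetric])
    finally show ?thesis .
  qed
  have a: "specnorm 1 ns A = maxabs ns A"
  proof -
    have j0: "replicate (length ns) 0 \<in> idx ns" using pos by (simp add: idx_def)
    have fin: "finite ((\<lambda>ks. cmod (A ks)) ` idx ns)" by (simp add: finite_idx)
    then have "maxabs ns A \<in> (\<lambda>ks. cmod (A ks)) ` idx ns"
      unfolding maxabs_def using j0 by (intro Max_in) auto
    then obtain j where j: "j \<in> idx ns" "maxabs ns A = cmod (A j)" by auto
    have Mge: "cmod (A ks) \<le> maxabs ns A" if "ks \<in> idx ns" for ks
      unfolding maxabs_def using fin that by (intro Max_ge) auto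
    have "cmod (A j) \<le> specnorm 1 ns A"
    proof -
      have "U 1 (\<lambda>k i. if i = j!k then 1 else 0)"
        unfolding U_def using idx_nth[OF j(1)] by (auto intro: lpnorm_delta)
      from upper[OF _ this] show ?thesis by (simp add: linform_delta[OF j(1)])
    qed
    moreover have "specnorm 1 ns A \<le> maxabs ns A"
    proof (rule least)
      fix xs assume U: "U 1 xs"
      have "cmod (linform ns A xs) \<le> (\<Sum>ks\<in>idx ns. cmod (A ks) * (\<Prod>k<length ns. cmod (xs k (ks!k))))"
        unfolding linform_def
        by (rule order_trans[OF norm_sum]) (simp add: norm_mult prod_norm[symmetric])
      also have "\<dots> \<le> (\<Sum>ks\<in>idx ns. maxabs ns A * (\<Prod>k<length ns. cmod (xs k (ks!k))))"
        using Mge by (intro sum_mono mult_right_mono) (auto intro: prod_nonneg)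
      also have "\<dots> = maxabs ns A * (\<Prod>k<length ns. \<Sum>i<ns!k. cmod (xs k i))"
        by (simp only: sum_distrib_left[symmetric] sum_prod_idx[of "\<lambda>k i. cmod (xs k i)"])
      also have "\<dots> = maxabs ns A" using U by (simp add: U_def lpnorm_1)
      finally show "cmod (linform ns A xs) \<le> maxabs ns A" .
    qed simp
    ultimately show ?thesis using j by simp
  qed
  have e: "0 \<le> specnorm p ns A - specnorm q ns A \<and>
           specnorm p ns A - specnorm q ns A \<le> (p - q) * norm1 ns A * real N * ln (real N)"
    if "p \<ge> q" "q \<ge> 1" for p q
  proof
    show "0 \<le> specnorm p ns A - specnorm q ns A" using b[OF that] by simp
    define t where "t = 1/q - 1/p"
    have "1/p \<le> 1/q" using that by (intro divide_left_mono) auto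
    moreover have "1/q \<le> 1" "0 \<le> 1/p" using that by auto
    ultimately have t0: "0 \<le> t" "t \<le> 1" unfolding t_def by linarith+
    have tpq: "t \<le> p - q"
    proof -
      have "t = (p - q) / (p * q)" using that by (simp add: t_def field_simps)
      also have "\<dots> \<le> (p - q) / 1"
      proof -
        have "1 \<le> p * q" using that mult_mono[of 1 p 1 q] by simp
        then show ?thesis using that by (intro divide_left_mono) auto
      qed
      finally show ?thesis by simp
    qed
    define u where "u = t * ln (real N)"
    have u0: "0 \<le> u" using t0 N1 by (simp add: u_def)
    have Nt: "real N powr t = exp u" using N1 by (simp add: powr_def u_def mult.commute)
    have "exp u - 1 \<le> u * exp u"
    proof -
      have "1 - u \<le> exp (-u)" using exp_ge_add_one_self[of "-u"] by simp
      then have "(1 - u) * exp u \<le> exp (-u) * exp u" by (intro mult_right_mono) auto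
      then show ?thesis by (simp add: exp_minus field_simps)
    qed
    moreover have "exp u \<le> real N"
    proof -
      have "exp u = real N powr t" using Nt by simp
      also have "\<dots> \<le> real N powr 1" using N1 t0 by (intro powr_mono) auto
      finally show ?thesis using N1 by simp
    qed
    ultimately have key: "real N powr t - 1 \<le> (p - q) * real N * ln (real N)"
    proof -
      assume h1: "exp u - 1 \<le> u * exp u" and h2: "exp u \<le> real N"
      have "u * exp u \<le> u * real N" using h2 u0 by (intro mult_left_mono)
      also have "\<dots> \<le> (p - q) * ln (real N) * real N"
        unfolding u_def using tpq N1 by (intro mult_right_mono) (auto intro: mult_right_mono)
      finally show ?thesis using h1 Nt by (simp add: mult_ac)
    qed
    have sq: "0 \<le> specnorm q ns A" "specnorm q ns A \<le> norm1 ns A" using that snn d by auto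
    have Nt1: "real N powr t \<ge> 1" using N1 t0 by (simp add: ge_one_powr_ge_zero)
    have "specnorm p ns A - specnorm q ns A \<le> (real N powr t - 1) * specnorm q ns A"
      using c'[OF that] by (simp add: t_def algebra_simps)
    also have "\<dots> \<le> (real N powr t - 1) * norm1 ns A"
      using sq Nt1 by (intro mult_left_mono) auto
    also have "\<dots> \<le> ((p - q) * real N * ln (real N)) * norm1 ns A"
      using key sq by (intro mult_right_mono) auto
    finally show "specnorm p ns A - specnorm q ns A \<le> (p - q) * norm1 ns A * real N * ln (real N)"
      by (simp add: mult_ac)
  qed
  show ?thesis using a b c d e by auto
qed

end
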